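(* With the notation below, every real-valued $f\in\mathcal K(C_p)$ admits a decomposition $f(\lambda)=\sum_i\Theta_{h_i,\mu_i}(\lambda)-\sum_j\Theta_{h'_j,\mu'_j}(\lambda)-h\lambda+c$ with finitely many $(h_i,\mu_i),(h'_j,\mu'_j)\in H_p^+\times\mathbb{R}_+^*$, $c\in\mathbb{R}$, $h\in H_p$, where $(p-1)h=\sum_ih_i-\sum_jh'_j$, $h_i\leq\mu_i<ph_i$ and $h'_j\leq\mu'_j<ph'_j$.
   Context: Let $p$ be a prime, $H_p=\mathbb{Z}[1/p]$, $H_p^+=H_p\cap(0,\infty)$. $\mathcal K(C_p)$ is the set of continuous piecewise affine functions $f:(0,\infty)\to\mathbb{R}$ (finitely many breakpoints on compact subintervals) with slopes in $H_p$ and $f(p\lambda)=f(\lambda)$, together with the constant $-\infty$. Let $\theta(\lambda)=\sum_{m\geq0}\max(0,1-p^m\lambda)+\sum_{m\geq1}\max(0,p^{-m}\lambda-1)$ for $\lambda>0$, and $\Theta_{h,\mu}(\lambda)=\mu\,\theta(\mu^{-1}h\lambda)$ for $h\in H_p^+$, $\mu>0$. *)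

theory Defs
  imports "HOL-Analysis.Analysis"
begin

definition Hp :: "nat \<Rightarrow> real set" where
  "Hp p = {x. \<exists>k::int. \<exists>n::nat. x = real_of_int k / (real p) ^ n}"

definition Hp_pos :: "nat \<Rightarrow> real set" where
  "Hp_pos p = Hp p \<inter> {0<..}"

definition pw_affine_Hp :: "nat \<Rightarrow> (real \<Rightarrow> real) \<Rightarrow> bool" where
  "pw_affine_Hp p f \<longleftrightarrow>
     continuous_on {0<..} f \<and>
     (\<forall>a b. 0 < a \<and> a < b \<longrightarrow>
        (\<exists>T. finite T \<and> a \<in> T \<and> b \<in> T \<and> T \<subseteq> {a..b} \<and>
          (\<forall>s t. s \<in> T \<and> t \<in> T \<and> s < t \<and> {s<..<t} \<inter> T = {} \<longrightarrow>
             (\<exists>m \<in> Hp p. \<exists>c. \<forall>x \<in> {s..t}. f x = m * x + c))))"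

text \<open>Real-valued elements of K(C_p) (the constant -oo is excluded).\<close>
definition K_Cp :: "nat \<Rightarrow> (real \<Rightarrow> real) set" where
  "K_Cp p = {f. pw_affine_Hp p f \<and> (\<forall>lam::real. lam > 0 \<longrightarrow> f (real p * lam) = f lam)}"

definition theta :: "nat \<Rightarrow> real \<Rightarrow> real" where
  "theta p lam = (\<Sum>m. max 0 (1 - (real p) ^ m * lam))
              + (\<Sum>m. max 0 (lam / (real p) ^ (Suc m) - 1))"

definition Theta :: "nat \<Rightarrow> real \<Rightarrow> real \<Rightarrow> real \<Rightarrow> real" where
  "Theta p h \<mu> lam = \<mu> * theta p (h * lam / \<mu>)"

end

theory Submission imports Defs begin

lemma Hp_add: "x \<in> Hp p \<Longrightarrow> y \<in> Hp p \<Longrightarrow> p > 0 \<Longrightarrow> x + y \<in> Hp p"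
proof -
  assume "x \<in> Hp p" "y \<in> Hp p" and p: "p > 0"
  then obtain k1 n1 k2 n2 where x: "x = real_of_int k1 / real p ^ n1" and y: "y = real_of_int k2 / real p ^ n2"
    unfolding Hp_def by blast
  have "x + y = real_of_int (k1 * int p ^ n2 + k2 * int p ^ n1) / real p ^ (n1 + n2)"
    using p by (simp add: x y field_simps power_add)
  then show ?thesis unfolding Hp_def by blast
qed

lemma Hp_uminus: "x \<in> Hp p \<Longrightarrow> - x \<in> Hp p"
proof -
  assume "x \<in> Hp p"
  then obtain k n where x: "x = real_of_int k / real p ^ n" unfolding Hp_def by blast
  have "-x = real_of_int (-k) / real p ^ n" by (simp add: x)
  then show ?thesis unfolding Hp_def by blast
qed

lemma Hp_diff: "x \<in> Hp p \<Longrightarrow> y \<in> Hp p \<Longrightarrow> p > 0 \<Longrightarrow> x - y \<in> Hp p"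
  using Hp_add[of x p "-y"] Hp_uminus[of y p] by simp

lemma Hp_int: "real_of_int k \<in> Hp p"
proof -
  have "real_of_int k = real_of_int k / real p ^ 0" by simp
  then show ?thesis unfolding Hp_def by blast
qed

lemma Hp_0: "0 \<in> Hp p" using Hp_int[of 0] by simp

lemma Hp_mult: "x \<in> Hp p \<Longrightarrow> y \<in> Hp p \<Longrightarrow> x * y \<in> Hp p"
proof -
  assume "x \<in> Hp p" "y \<in> Hp p"
  then obtain k1 n1 k2 n2 where x: "x = real_of_int k1 / real p ^ n1" and y: "y = real_of_int k2 / real p ^ n2"
    unfolding Hp_def by blast
  have "x * y = real_of_int (k1 * k2) / real p ^ (n1 + n2)"
    by (simp add: x y power_add)
  then show ?thesis unfolding Hp_def by blast
qed

lemma Hp_p: "real p \<in> Hp p" using Hp_int[of "int p"] by simp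

lemma Hp_sum_list: "p > 0 \<Longrightarrow> (\<forall>z \<in> set xs. g z \<in> Hp p) \<Longrightarrow> sum_list (map g xs) \<in> Hp p"
  by (induction xs) (auto intro: Hp_add Hp_0)

definition e1 :: "nat \<Rightarrow> real \<Rightarrow> nat \<Rightarrow> real" where
  "e1 p x m = max 0 (1 - (real p) ^ m * x)"
definition e2 :: "nat \<Rightarrow> real \<Rightarrow> nat \<Rightarrow> real" where
  "e2 p x m = max 0 (x / (real p) ^ m - 1)"

lemma theta_e: "theta p x = suminf (e1 p x) + suminf (\<lambda>m. e2 p x (Suc m))"
  unfolding theta_def e1_def e2_def by simp

lemma e1_summable:
  assumes p: "2 \<le> p" and x: "x > 0" shows "summable (e1 p x)"
proof -
  obtain N where N: "1 / x < real p ^ N" using real_arch_pow[of "real p" "1/x"] p by auto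
  have "e1 p x m = 0" if "m \<notin> {..<N}" for m
  proof -
    have "real p ^ N \<le> real p ^ m" using that p by (intro power_increasing) auto
    with N have "1 / x < real p ^ m" by simp
    then have "1 < real p ^ m * x" using x by (simp add: field_simps)
    then show ?thesis unfolding e1_def by simp
  qed
  then show ?thesis by (intro summable_finite[of "{..<N}"]) auto
qed

lemma e2_summable:
  assumes p: "2 \<le> p" and x: "x > 0" shows "summable (e2 p x)"
proof -
  obtain N where N: "x < real p ^ N" using real_arch_pow[of "real p" x] p by auto
  have "e2 p x m = 0" if "m \<notin> {..<N}" for m
  proof -
    have "real p ^ N \<le> real p ^ m" using that p by (intro power_increasing) auto
    with N have "x < real p ^ m" by simp
    then have "x / real p ^ m < 1" using p by (simp add: field_simps)
    then show ?thesis unfolding e2_def by simp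
  qed
  then show ?thesis by (intro summable_finite[of "{..<N}"]) auto
qed

lemma theta_shift:
  assumes p: "2 \<le> p" and x: "x > 0"
  shows "theta p (real p * x) = theta p x + x - 1"
proof -
  have px: "real p * x > 0" using p x by simp
  have s1: "summable (e1 p x)" using e1_summable[OF p x] .
  have s2: "summable (e2 p x)" using e2_summable[OF p x] .
  have a: "e1 p (real p * x) m = e1 p x (Suc m)" for m
    unfolding e1_def by (simp add: algebra_simps)
  have b: "e2 p (real p * x) (Suc m) = e2 p x m" for m
    unfolding e2_def using p by simp
  have "e1 p (real p * x) = (\<lambda>m. e1 p x (Suc m))" using a by auto
  then have "suminf (e1 p (real p * x)) = suminf (e1 p x) - e1 p x 0"
    using suminf_split_head[OF s1] by simp
  moreover have "suminf (\<lambda>m. e2 p (real p * x) (Suc m)) = suminf (e2 p x)"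
    using b by simp
  moreover have "suminf (\<lambda>m. e2 p x (Suc m)) = suminf (e2 p x) - e2 p x 0"
    using suminf_split_head[OF s2] .
  ultimately have "theta p (real p * x) = theta p x - e1 p x 0 + e2 p x 0"
    unfolding theta_e by simp
  then show ?thesis unfolding e1_def e2_def by simp
qed

lemma theta_zero:
  assumes p: "2 \<le> p" and x: "1 \<le> x" "x \<le> real p"
  shows "theta p x = 0"
proof -
  have a: "e1 p x m = 0" for m
  proof -
    have "1 \<le> real p ^ m" using p by simp
    then have "1 \<le> real p ^ m * x" using x by (metis mult_mono' mult_1_right zero_le_one)
    then show ?thesis unfolding e1_def by simp
  qed
  have b: "e2 p x (Suc m) = 0" for m
  proof -
    have "real p \<le> real p ^ Suc m" using p
      by (metis One_nat_def Suc_le_mono le0 numeral_le_real_of_nat_iff one_le_numeral order_trans power_increasing power_one_right)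
    then have "x \<le> real p ^ Suc m" using x by linarith
    then have "x / real p ^ Suc m \<le> 1" using p by (simp add: field_simps)
    then show ?thesis unfolding e2_def by simp
  qed
  have "e1 p x = (\<lambda>_. 0)" "(\<lambda>m. e2 p x (Suc m)) = (\<lambda>_. 0)" using a b by auto
  then show ?thesis unfolding theta_e by simp
qed

lemma theta_hinge:
  assumes p: "2 \<le> p" and t: "1 \<le> t" "t < real p" and x: "1 \<le> x" "x \<le> real p"
  shows "t * theta p (x / t) = max 0 (t - x)"
proof (cases "t \<le> x")
  case True
  have "1 \<le> x / t" using True t by simp
  moreover have "x \<le> t * real p" proof -
    have "1 * real p \<le> t * real p" using t by (intro mult_right_mono) auto
    then show ?thesis using x by linarith
  qed
  then have "x / t \<le> real p" using t by (simp add: field_simps)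
  ultimately show ?thesis using theta_zero[OF p] True by simp
next
  case False
  have y: "x / t > 0" using t x by simp
  have "1 * real p \<le> x * real p" using x by (intro mult_right_mono) auto
  then have "t \<le> x * real p" using t by linarith
  then have "1 \<le> real p * (x / t)" using t by (simp add: field_simps)
  moreover have "real p * (x / t) \<le> real p" using t x False p by (simp add: field_simps)
  ultimately have "theta p (real p * (x / t)) = 0" using theta_zero[OF p] by simp
  with theta_shift[OF p y] have "theta p (x / t) = 1 - x / t" by simp
  then show ?thesis using False t by (simp add: field_simps)
qed

lemma hsum_zero: "(\<forall>(s,t)\<in>set S. t \<le> x) \<Longrightarrow> (\<Sum>(s,t)\<leftarrow>S. s * max 0 (t - x)) = (0::real)"
  by (induction S) auto

lemma hinge:
  assumes p: "p > 0"
  shows "finite T \<Longrightarrow> card T = n \<Longrightarrow> a \<in> T \<Longrightarrow> b \<in> T \<Longrightarrow> T \<subseteq> {a..b} \<Longrightarrow>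
    (\<forall>s t. s \<in> T \<and> t \<in> T \<and> s < t \<and> {s<..<t} \<inter> T = {} \<longrightarrow>
             (\<exists>m \<in> Hp p. \<exists>c. \<forall>x \<in> {s..t}. f x = m * x + c)) \<Longrightarrow>
    \<exists>C L S. L \<in> Hp p \<and> (\<forall>(s,t)\<in>set S. s \<in> Hp p \<and> a \<le> t \<and> t < b) \<and>
      (\<forall>x\<in>{a..b}. f x = C + L * x + (\<Sum>(s,t)\<leftarrow>S. s * max 0 (t - x)))"
proof (induction n arbitrary: T b rule: less_induct)
  case (less n T b)
  note fin = less.prems(1) and aT = less.prems(3) and bT = less.prems(4) and sub = less.prems(5)
    and gap = less.prems(6)
  show ?case
  proof (cases "b = a")
    case True
    show ?thesis
      by (rule exI[of _ "f a"], rule exI[of _ 0], rule exI[of _ "[]"]) (use True Hp_0 in auto)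
  next
    case False
    have ab: "a < b" using False aT sub by force
    define T' where "T' = T - {b}"
    define t where "t = Max T'"
    have fin': "finite T'" using fin T'_def by simp
    have aT': "a \<in> T'" using aT False T'_def by simp
    have tT': "t \<in> T'" unfolding t_def using fin' aT' by (intro Max_in) auto
    have at: "a \<le> t" unfolding t_def using fin' aT' by simp
    have tb: "t < b" using tT' sub T'_def by auto
    have sub': "T' \<subseteq> {a..t}"
    proof
      fix y assume "y \<in> T'"
      then show "y \<in> {a..t}" using sub fin' unfolding t_def T'_def by auto
    qed
    have card': "card T' < n" using less.prems(2) bT fin T'_def by (metis card_Diff1_less)
    have gap': "\<forall>s t. s \<in> T' \<and> t \<in> T' \<and> s < t \<and> {s<..<t} \<inter> T' = {} \<longrightarrow>
             (\<exists>m \<in> Hp p. \<exists>c. \<forall>x \<in> {s..t}. f x = m * x + c)"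
    proof (intro allI impI)
      fix s u assume h: "s \<in> T' \<and> u \<in> T' \<and> s < u \<and> {s<..<u} \<inter> T' = {}"
      have "u \<le> t" unfolding t_def using fin' h by simp
      then have "{s<..<u} \<inter> T = {}" using h tb T'_def by auto
      then show "\<exists>m \<in> Hp p. \<exists>c. \<forall>x \<in> {s..u}. f x = m * x + c" using gap h T'_def by auto
    qed
    obtain C L S where L: "L \<in> Hp p" and S: "\<forall>(s,u)\<in>set S. s \<in> Hp p \<and> a \<le> u \<and> u < t"
      and fS: "\<forall>x\<in>{a..t}. f x = C + L * x + (\<Sum>(s,u)\<leftarrow>S. s * max 0 (u - x))"
      using less.IH[OF card' fin' refl aT' tT' sub' gap'] by blast
    have "{t<..<b} \<inter> T = {}"
    proof (rule ccontr)
      assume "{t<..<b} \<inter> T \<noteq> {}"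
      then obtain y where y: "y \<in> T" "t < y" "y < b" by auto
      then have "y \<in> T'" using T'_def by auto
      then have "y \<le> t" unfolding t_def using fin' by simp
      then show False using y by simp
    qed
    then obtain m c where m: "m \<in> Hp p" and fm: "\<forall>x\<in>{t..b}. f x = m * x + c"
      using gap tb tT' bT T'_def by blast
    have "\<forall>(s,u)\<in>set S. u \<le> t" using S by auto
    then have "(\<Sum>(s,u)\<leftarrow>S. s * max 0 (u - t)) = 0" by (rule hsum_zero)
    then have ft: "f t = C + L * t" using fS at by auto
    show ?thesis
    proof (intro exI conjI)
      show "m \<in> Hp p" by fact
      show "\<forall>(s,u)\<in>set ((m - L, t) # S). s \<in> Hp p \<and> a \<le> u \<and> u < b"
        using S m L Hp_diff[OF m L p] at tb by auto
      show "\<forall>x\<in>{a..b}. f x = (C - (m - L) * t) + m * x + (\<Sum>(s,u)\<leftarrow>((m - L, t) # S). s * max 0 (u - x))"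
      proof
        fix x assume x: "x \<in> {a..b}"
        show "f x = (C - (m - L) * t) + m * x + (\<Sum>(s,u)\<leftarrow>((m - L, t) # S). s * max 0 (u - x))"
        proof (cases "x \<le> t")
          case True
          then show ?thesis using fS x by (simp add: algebra_simps)
        next
          case False
          have "\<forall>(s,u)\<in>set S. u \<le> x" using S False by auto
          then have z: "(\<Sum>(s,u)\<leftarrow>S. s * max 0 (u - x)) = 0" by (rule hsum_zero)
          have "f x = m * x + c" "f t = m * t + c" using fm x False at tb by auto
          then show ?thesis using z ft False by (simp add: algebra_simps)
        qed
      qed
    qed
  qed
qed


definition Alist :: "(real \<times> real) list \<Rightarrow> (real \<times> real) list" where
  "Alist S = map (\<lambda>(s,t). (s, s*t)) (filter (\<lambda>(s,t). s > 0) S)"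
definition Blist :: "(real \<times> real) list \<Rightarrow> (real \<times> real) list" where
  "Blist S = map (\<lambda>(s,t). (-s, -s*t)) (filter (\<lambda>(s,t). s < 0) S)"

lemma AB_sum: "(\<Sum>(hi, \<mu>i) \<leftarrow> Alist S. hi) - (\<Sum>(hj, \<mu>j) \<leftarrow> Blist S. hj) = (\<Sum>(s,t)\<leftarrow>S. s)"
  unfolding Alist_def Blist_def by (induction S) auto

lemma Theta_pos: "s \<noteq> 0 \<Longrightarrow> t > 0 \<Longrightarrow> Theta p s (s*t) x = s*t*theta p (x/t)"
proof -
  assume "s \<noteq> 0" "t > 0"
  then have "s * x / (s * t) = x / t" by simp
  then show ?thesis unfolding Theta_def by simp
qed

lemma Theta_neg: "s \<noteq> 0 \<Longrightarrow> t > 0 \<Longrightarrow> Theta p (-s) (-s*t) x = - (s*t*theta p (x/t))"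
proof -
  assume "s \<noteq> 0" "t > 0"
  then have "- s * x / (- s * t) = x / t" by simp
  then show ?thesis unfolding Theta_def by simp
qed

lemma AB_Theta: "(\<forall>(s,t)\<in>set S. t > 0) \<Longrightarrow>
  (\<Sum>(hi, \<mu>i) \<leftarrow> Alist S. Theta p hi \<mu>i x) - (\<Sum>(hj, \<mu>j) \<leftarrow> Blist S. Theta p hj \<mu>j x)
   = (\<Sum>(s,t)\<leftarrow>S. s*t*theta p (x/t))"
proof (induction S)
  case Nil
  then show ?case unfolding Alist_def Blist_def by simp
next
  case (Cons a S)
  obtain s t where a: "a = (s,t)" by force
  have t: "t > 0" using Cons.prems a by auto
  have IH: "(\<Sum>(hi, \<mu>i) \<leftarrow> Alist S. Theta p hi \<mu>i x) - (\<Sum>(hj, \<mu>j) \<leftarrow> Blist S. Theta p hj \<mu>j x)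
   = (\<Sum>(s,t)\<leftarrow>S. s*t*theta p (x/t))" using Cons by auto
  consider "s > 0" | "s < 0" | "s = 0" by linarith
  then show ?case
  proof cases
    case 1
    then show ?thesis using IH Theta_pos[of s t p x] t a unfolding Alist_def Blist_def by auto
  next
    case 2
    then show ?thesis using IH Theta_neg[of s t p x] t a unfolding Alist_def Blist_def by auto
  next
    case 3
    then show ?thesis using IH a unfolding Alist_def Blist_def by auto
  qed
qed

lemma Phi_shift: "2 \<le> p \<Longrightarrow> x > 0 \<Longrightarrow> (\<forall>(s,t)\<in>set S. t > 0) \<Longrightarrow>
  (\<Sum>(s,t)\<leftarrow>S. s*t*theta p (real p * x/t)) = (\<Sum>(s,t)\<leftarrow>S. s*t*theta p (x/t)) + x * (\<Sum>(s,t)\<leftarrow>S. s) - (\<Sum>(s,t)\<leftarrow>S. s*t)"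
proof (induction S)
  case Nil
  then show ?case by simp
next
  case (Cons a S)
  obtain s t where a: "a = (s,t)" by force
  have t: "t > 0" using Cons.prems a by auto
  have "theta p (real p * (x / t)) = theta p (x/t) + x/t - 1"
    using theta_shift[of p "x/t"] Cons.prems t by simp
  moreover have "real p * x / t = real p * (x / t)" by simp
  ultimately have "theta p (real p * x / t) = theta p (x/t) + x/t - 1" by metis
  then have "s*t*theta p (real p * x / t) = s*t*(theta p (x/t) + x/t - 1)"
    by simp
  also have "\<dots> = s*t*theta p (x/t) + s*t*(x/t) - s * t"
    by (simp only: distrib_left right_diff_distrib mult_1_right)
  also have "s*t*(x/t) = x * s" using t by simp
  finally have "s*t*theta p (real p * x / t) = s*t*theta p (x/t) + x * s - s * t" .
  then show ?case using Cons a by (auto simp: distrib_left)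
qed

lemma Phi_hinge: "2 \<le> p \<Longrightarrow> 1 \<le> x \<Longrightarrow> x \<le> real p \<Longrightarrow> (\<forall>(s,t)\<in>set S. 1 \<le> t \<and> t < real p) \<Longrightarrow>
  (\<Sum>(s,t)\<leftarrow>S. s*t*theta p (x/t)) = (\<Sum>(s,t)\<leftarrow>S. s * max 0 (t - x))"
proof (induction S)
  case Nil
  then show ?case by simp
next
  case (Cons a S)
  obtain s t where a: "a = (s,t)" by force
  have t: "1 \<le> t" "t < real p" using Cons.prems a by auto
  have "s*t*theta p (x/t) = s * max 0 (t - x)"
    using theta_hinge[of p t x] Cons.prems t by (simp add: mult.assoc)
  then show ?case using Cons a by auto
qed

lemma hsum_one: "(\<forall>(s,t)\<in>set S. 1 \<le> t) \<Longrightarrow>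
  (\<Sum>(s,t)\<leftarrow>S. s * max 0 (t - 1)) = (\<Sum>(s,t)\<leftarrow>S. s*t) - (\<Sum>(s,t)\<leftarrow>S. (s::real))"
  by (induction S) (auto simp: algebra_simps)


lemma per_ext:
  assumes p: "2 \<le> p" and per: "\<And>x. x > 0 \<Longrightarrow> D (real p * x) = (D x :: real)"
    and base: "\<And>x. 1 \<le> x \<Longrightarrow> x \<le> real p \<Longrightarrow> D x = 0"
  shows "x > 0 \<Longrightarrow> D x = 0"
proof -
  have P: "\<forall>x. 1 / real p ^ n \<le> x \<and> x \<le> real p ^ Suc n \<longrightarrow> D x = 0" for n
  proof (induction n)
    case 0
    then show ?case using base by simp
  next
    case (Suc n)
    show ?case
    proof (intro allI impI)
      fix x assume x: "1 / real p ^ Suc n \<le> x \<and> x \<le> real p ^ Suc (Suc n)"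
      have pp: "real p \<ge> 2" using p by simp
      have xpos: "x > 0" using x pp by (smt (verit) divide_pos_pos zero_less_power)
      have ge1: "1 \<le> real p ^ n" using pp by (intro one_le_power) auto
      then have le1: "1 / real p ^ n \<le> 1" by (auto simp: divide_le_eq)
      have ge1': "1 \<le> real p ^ Suc n" using pp by (intro one_le_power) auto
      consider "x > real p ^ Suc n" | "x < 1 / real p ^ n" | "1 / real p ^ n \<le> x \<and> x \<le> real p ^ Suc n" by linarith
      then show "D x = 0"
      proof cases
        case 1
        have "x / real p \<le> real p ^ Suc n" using x pp by (simp add: field_simps)
        moreover have "x / real p \<ge> 1 / real p ^ n"
        proof -
          have "x / real p > real p ^ n" using 1 pp by (simp add: field_simps)
          then show ?thesis using le1 ge1 by linarith
        qed
        ultimately have "D (x / real p) = 0" using Suc by auto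
        moreover have "D (real p * (x / real p)) = D (x / real p)" using xpos pp by (intro per) simp
        ultimately show ?thesis using pp by simp
      next
        case 2
        have "real p * x \<ge> 1 / real p ^ n" using x pp by (simp add: field_simps)
        moreover have "real p * x \<le> real p ^ Suc n"
        proof -
          have "real p * x < real p / real p ^ n" using 2 pp by (simp add: field_simps)
          also have "\<dots> \<le> real p" using ge1 pp by (simp add: field_simps)
          also have "\<dots> \<le> real p ^ Suc n" using ge1 pp by simp
          finally show ?thesis by simp
        qed
        ultimately have "D (real p * x) = 0" using Suc by auto
        then show ?thesis using per xpos by simp
      next
        case 3
        then show ?thesis using Suc by auto
      qed
    qed
  qed
  assume x: "x > 0"
  have pp: "real p > 1" using p by simp
  obtain n1 where n1: "x < real p ^ n1" using real_arch_pow[OF pp] by blast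
  obtain n2 where n2: "1 / x < real p ^ n2" using real_arch_pow[OF pp] by blast
  let ?n = "max n1 n2"
  have "real p ^ n1 \<le> real p ^ Suc ?n" using pp by (intro power_increasing) auto
  moreover have "real p ^ n2 \<le> real p ^ ?n" using pp by (intro power_increasing) auto
  ultimately have h2: "x * real p ^ n2 \<le> x * real p ^ ?n" "x \<le> real p ^ Suc ?n"
    using n1 x by (auto intro: mult_left_mono)
  have "1 < x * real p ^ n2" using n2 x by (simp add: field_simps)
  then have "1 \<le> x * real p ^ ?n" using h2 by linarith
  then have "1 / real p ^ ?n \<le> x" using pp by (simp add: field_simps)
  then have "1 / real p ^ ?n \<le> x \<and> x \<le> real p ^ Suc ?n" using h2 by simp
  then show ?thesis using P by blast
qed


lemma box_cond: "s > 0 \<Longrightarrow> 1 \<le> t \<Longrightarrow> t < real p \<Longrightarrow> s * t > 0 \<and> s \<le> s * t \<and> s * t < real p * s"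
proof -
  assume s: "s > 0" and t: "1 \<le> t" "t < real p"
  have "s * 1 \<le> s * t" using s t by (intro mult_left_mono) auto
  moreover have "s * t < s * real p" using s t by (intro mult_strict_left_mono) auto
  ultimately show ?thesis using s t by (simp add: mult.commute)
qed

theorem theorem5p12:
  fixes p :: nat and f :: "real \<Rightarrow> real"
  assumes "prime p"
    and "f \<in> K_Cp p"
  shows "\<exists>(A :: (real \<times> real) list) (B :: (real \<times> real) list) (h :: real) (c :: real).
           (\<forall>(hi, \<mu>i) \<in> set A. hi \<in> Hp_pos p \<and> \<mu>i > 0 \<and> hi \<le> \<mu>i \<and> \<mu>i < real p * hi) \<and>
           (\<forall>(hj, \<mu>j) \<in> set B. hj \<in> Hp_pos p \<and> \<mu>j > 0 \<and> hj \<le> \<mu>j \<and> \<mu>j < real p * hj) \<and>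
           h \<in> Hp p \<and>
           (real p - 1) * h = (\<Sum>(hi, \<mu>i) \<leftarrow> A. hi) - (\<Sum>(hj, \<mu>j) \<leftarrow> B. hj) \<and>
           (\<forall>lam::real. lam > 0 \<longrightarrow> f lam = (\<Sum>(hi, \<mu>i) \<leftarrow> A. Theta p hi \<mu>i lam)
                        - (\<Sum>(hj, \<mu>j) \<leftarrow> B. Theta p hj \<mu>j lam) - h * lam + c)"
proof -
  have p2: "2 \<le> p" using assms(1) prime_ge_2_nat by blast
  then have p0: "p > 0" by simp
  have pp: "real p \<ge> 2" using p2 by simp
  from assms(2) have pw: "pw_affine_Hp p f" and per: "\<And>lam. lam > 0 \<Longrightarrow> f (real p * lam) = f lam"
    unfolding K_Cp_def by auto
  have "0 < (1::real) \<and> 1 < real p" using pp by simp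
  with pw obtain T where T: "finite T" "1 \<in> T" "real p \<in> T" "T \<subseteq> {1..real p}"
    and gap: "\<forall>s t. s \<in> T \<and> t \<in> T \<and> s < t \<and> {s<..<t} \<inter> T = {} \<longrightarrow>
             (\<exists>m \<in> Hp p. \<exists>c. \<forall>x \<in> {s..t}. f x = m * x + c)"
    unfolding pw_affine_Hp_def by blast
  obtain C L S where L: "L \<in> Hp p" and S: "\<forall>(s,t)\<in>set S. s \<in> Hp p \<and> 1 \<le> t \<and> t < real p"
    and fS: "\<forall>x\<in>{1..real p}. f x = C + L * x + (\<Sum>(s,t)\<leftarrow>S. s * max 0 (t - x))"
    using hinge[OF p0, of T "card T" 1 "real p" f] T gap by blast
  define s0 where "s0 = - L * (real p - 1) - (\<Sum>(s,t)\<leftarrow>S. s)"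
  define S' where "S' = (s0, 1) # S"
  have H1: "(1::real) \<in> Hp p" using Hp_int[of 1 p] by simp
  have sumH: "(\<Sum>(s,t)\<leftarrow>S. s) \<in> Hp p"
    using S by (intro Hp_sum_list[OF p0]) auto
  have s0H: "s0 \<in> Hp p" unfolding s0_def
    by (intro Hp_diff[OF _ sumH p0] Hp_mult Hp_uminus L Hp_diff[OF Hp_p H1 p0])
  have S': "\<forall>(s,t)\<in>set S'. s \<in> Hp p \<and> 1 \<le> t \<and> t < real p"
    using S s0H pp unfolding S'_def by auto
  have tpos: "\<forall>(s,t)\<in>set S'. t > 0" using S' by auto
  have "f 1 = f (real p)" using per[of 1] by simp
  moreover have "f 1 = C + L + (\<Sum>(s,t)\<leftarrow>S. s*t) - (\<Sum>(s,t)\<leftarrow>S. s)"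
  proof -
    have "\<forall>(s,t)\<in>set S. 1 \<le> t" using S by auto
    from hsum_one[OF this] show ?thesis using fS pp by simp
  qed
  moreover have "f (real p) = C + L * real p"
  proof -
    have "\<forall>(s,t)\<in>set S. t \<le> real p" using S by auto
    from hsum_zero[OF this] show ?thesis using fS pp by simp
  qed
  ultimately have key: "(\<Sum>(s,t)\<leftarrow>S. s*t) - (\<Sum>(s,t)\<leftarrow>S. s) = L * (real p - 1)"
    by (simp add: algebra_simps)
  have sum1: "(\<Sum>(s,t)\<leftarrow>S'. s) = - L * (real p - 1)" unfolding S'_def s0_def by simp
  have sum2: "(\<Sum>(s,t)\<leftarrow>S'. s * t) = 0" unfolding S'_def s0_def using key by simp
  define Phi where "Phi x = (\<Sum>(s,t)\<leftarrow>S'. s*t*theta p (x/t))" for x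
  define D where "D x = f x - (Phi x + L * x + C)" for x
  have Dper: "D (real p * x) = D x" if x: "x > 0" for x
  proof -
    have "Phi (real p * x) = Phi x + x * (- L * (real p - 1)) - 0"
      unfolding Phi_def using Phi_shift[OF p2 x tpos] sum1 sum2 by simp
    then show ?thesis unfolding D_def using per[OF x] by (simp add: algebra_simps)
  qed
  have Dbase: "D x = 0" if x: "1 \<le> x" "x \<le> real p" for x
  proof -
    have "Phi x = (\<Sum>(s,t)\<leftarrow>S'. s * max 0 (t - x))"
    proof -
      have "\<forall>(s,t)\<in>set S'. 1 \<le> t \<and> t < real p" using S' by auto
      then show ?thesis unfolding Phi_def using Phi_hinge[OF p2 x] by blast
    qed
    also have "\<dots> = (\<Sum>(s,t)\<leftarrow>S. s * max 0 (t - x))" unfolding S'_def using x by simp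
    finally show ?thesis unfolding D_def using fS x by simp
  qed
  have D0: "D x = 0" if "x > 0" for x
    using per_ext[of p D, OF p2 Dper Dbase that] by blast
  show ?thesis
  proof (intro exI conjI)
    show "\<forall>(hi, \<mu>i) \<in> set (Alist S'). hi \<in> Hp_pos p \<and> \<mu>i > 0 \<and> hi \<le> \<mu>i \<and> \<mu>i < real p * hi"
      using S' box_cond unfolding Alist_def Hp_pos_def by fastforce
    show "\<forall>(hj, \<mu>j) \<in> set (Blist S'). hj \<in> Hp_pos p \<and> \<mu>j > 0 \<and> hj \<le> \<mu>j \<and> \<mu>j < real p * hj"
    proof
      fix z assume "z \<in> set (Blist S')"
      then obtain s t where z: "z = (-s, -s*t)" "(s,t) \<in> set S'" "s < 0" unfolding Blist_def by auto
      then have "s \<in> Hp p" "1 \<le> t" "t < real p" using S' by auto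
      then show "case z of (hj, \<mu>j) \<Rightarrow> hj \<in> Hp_pos p \<and> \<mu>j > 0 \<and> hj \<le> \<mu>j \<and> \<mu>j < real p * hj"
        using z box_cond[of "-s" t p] Hp_uminus[of s p] unfolding Hp_pos_def by auto
    qed
    show "- L \<in> Hp p" using Hp_uminus[OF L] .
    show "(real p - 1) * - L = (\<Sum>(hi, \<mu>i) \<leftarrow> Alist S'. hi) - (\<Sum>(hj, \<mu>j) \<leftarrow> Blist S'. hj)"
      using AB_sum[of S'] sum1 by simp
    show "\<forall>lam::real. lam > 0 \<longrightarrow> f lam = (\<Sum>(hi, \<mu>i) \<leftarrow> Alist S'. Theta p hi \<mu>i lam)
                        - (\<Sum>(hj, \<mu>j) \<leftarrow> Blist S'. Theta p hj \<mu>j lam) - (- L) * lam + C"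
    proof (intro allI impI)
      fix lam :: real assume "lam > 0"
      then have "D lam = 0" by (rule D0)
      then show "f lam = (\<Sum>(hi, \<mu>i) \<leftarrow> Alist S'. Theta p hi \<mu>i lam)
                        - (\<Sum>(hj, \<mu>j) \<leftarrow> Blist S'. Theta p hj \<mu>j lam) - (- L) * lam + C"
        using AB_Theta[OF tpos, of p lam] unfolding D_def Phi_def by simp
    qed
  qed
qed

end
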